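(* Let $\theta\ge1$ and let $V:\mathbb R_+\to\mathbb R$ be smooth with compact support contained in $(1,\infty)$ and with $\int_0^\infty V(y)\,y^{-2}\,dy\neq0$. Let $\psi_V$ be the function on $M$ supported in $B$ given by $\psi_V(x+iy)=V(y)$ for $y>1$ (the incomplete Eisenstein series $\sum_{\gamma\in\Gamma_\infty\backslash\Gamma}V(\Im\gamma z)$). Then, for even $k\to\infty$ and any choice of $f\in H_k$, \[ \mu_f\big(M_{(k-1)^\theta}\psi_V\big)=o\big(\nu(M_{(k-1)^\theta}\psi_V)\big). \]
   Context: Let $\Gamma=\mathrm{PSL}_2(\mathbb Z)$, $\Gamma_\infty$ its stabilizer of $\infty$, $M=\Gamma\backslash\mathbb H$, $z=x+iy$, $d\mu=y^{-2}dx\,dy$, $\mathrm{vol}(M)=\pi/3$, $\nu(\psi)=\frac1{\mathrm{vol}(M)}\int_M\psi\,d\mu$. For even $k$, $H_k$ is a basis of weight $k$ holomorphic cusp forms for $\mathrm{SL}_2(\mathbb Z)$ consisting of Hecke eigenforms normalized by $\int_M y^k|f|^2d\mu=1$, and $\mu_f(\psi)=\int_M\psi(z)y^k|f(z)|^2d\mu(z)$. $B=\{z\in M:\Im z>1\}$ (the region $y>1$ of the standard fundamental domain). For $\psi$ supported in $B$ and $H\ge1$, $M_H\psi(x+iy)=\psi(x+iy/H)$ for $y>H$ and $M_H\psi=0$ elsewhere. *)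

theory Defs
  imports "HOL-Analysis.Analysis"
begin

definition upper_half :: "complex set" where
  "upper_half = {z. Im z > 0}"

(* Standard (closed) fundamental domain of PSL_2(Z); M is identified with it
   up to a null set. *)
definition fund_dom :: "complex set" where
  "fund_dom = {z. Im z > 0 \<and> \<bar>Re z\<bar> \<le> 1/2 \<and> cmod z \<ge> 1}"

(* Integral over M w.r.t. d mu = y^-2 dx dy of a function given on the
   fundamental domain *)
definition int_M :: "(complex \<Rightarrow> real) \<Rightarrow> real" where
  "int_M g = (LINT z:fund_dom|lborel. g z / (Im z)^2)"

definition volM :: real where "volM = pi / 3"

definition nu :: "(complex \<Rightarrow> real) \<Rightarrow> real" where
  "nu \<psi> = int_M \<psi> / volM"

definition cusp_form :: "nat \<Rightarrow> (complex \<Rightarrow> complex) \<Rightarrow> bool" where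
  "cusp_form k f \<longleftrightarrow>
     f holomorphic_on upper_half \<and>
     (\<forall>a b c d :: int. a * d - b * c = 1 \<longrightarrow>
        (\<forall>z\<in>upper_half. f ((of_int a * z + of_int b) / (of_int c * z + of_int d))
                         = (of_int c * z + of_int d) ^ k * f z)) \<and>
     (\<forall>\<epsilon>>0. \<exists>Y. \<forall>z. Im z \<ge> Y \<longrightarrow> cmod (f z) \<le> \<epsilon>)"

definition hecke :: "nat \<Rightarrow> nat \<Rightarrow> (complex \<Rightarrow> complex) \<Rightarrow> complex \<Rightarrow> complex" where
  "hecke k n f z = of_nat n ^ (k - 1) *
     (\<Sum>(a, b, d) \<in> {(a, b, d). a * d = n \<and> b < d}.
        f ((of_nat a * z + of_nat b) / of_nat d) / of_nat d ^ k)"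

definition hecke_eigenform :: "nat \<Rightarrow> (complex \<Rightarrow> complex) \<Rightarrow> bool" where
  "hecke_eigenform k f \<longleftrightarrow>
     (\<forall>n\<ge>1. \<exists>c::complex. \<forall>z\<in>upper_half. hecke k n f z = c * f z)"

definition mu_f :: "nat \<Rightarrow> (complex \<Rightarrow> complex) \<Rightarrow> (complex \<Rightarrow> real) \<Rightarrow> real" where
  "mu_f k f \<psi> = int_M (\<lambda>z. \<psi> z * Im z ^ k * (cmod (f z))^2)"

definition Hk :: "nat \<Rightarrow> (complex \<Rightarrow> complex) set" where
  "Hk k = {f. cusp_form k f \<and> hecke_eigenform k f \<and> mu_f k f (\<lambda>_. 1) = 1}"

definition psiV :: "(real \<Rightarrow> real) \<Rightarrow> complex \<Rightarrow> real" where
  "psiV V z = (if Im z > 1 then V (Im z) else 0)"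

definition MH :: "real \<Rightarrow> (complex \<Rightarrow> real) \<Rightarrow> complex \<Rightarrow> real" where
  "MH H \<psi> z = (if Im z > H then \<psi> (Complex (Re z) (Im z / H)) else 0)"

definition smooth_pos :: "(real \<Rightarrow> real) \<Rightarrow> bool" where
  "smooth_pos V \<longleftrightarrow> (\<forall>n. \<forall>y>0. (deriv ^^ n) V differentiable (at y))"

end

theory Submission
  imports Defs "HOL-Complex_Analysis.Complex_Analysis"
begin


definition Fq :: "(complex \<Rightarrow> complex) \<Rightarrow> complex \<Rightarrow> complex" where
  "Fq f w = (if w = 0 then 0 else f (Ln w / (2 * of_real pi * \<i>)))"

lemma Im_Ln_div:
  assumes "w \<noteq> 0"
  shows "Im (Ln w / (2 * of_real pi * \<i>)) = - ln (cmod w) / (2*pi)"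
proof -
  have "Ln w / (2 * of_real pi * \<i>) = - \<i> * Ln w / of_real (2*pi)"
    by (simp add: field_simps)
  then show ?thesis using assms by simp
qed

lemma exp_Ln_div:
  assumes "w \<noteq> 0"
  shows "exp (2 * of_real pi * \<i> * (Ln w / (2 * of_real pi * \<i>))) = w"
  using assms by simp

lemma norm_exp_2pii: "cmod (exp (2 * of_real pi * \<i> * z)) = exp (- 2 * pi * Im z)"
  by (simp add: norm_exp_eq_Re)

lemma upper_half_iff: "z \<in> upper_half \<longleftrightarrow> Im z > 0"
  by (simp add: upper_half_def)

lemma Fq_exp:
  assumes per: "\<And>z n. z \<in> upper_half \<Longrightarrow> f (z + of_int n) = f z"
    and z: "z \<in> upper_half"
  shows "Fq f (exp (2 * of_real pi * \<i> * z)) = f z"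
proof -
  define w where "w = exp (2 * of_real pi * \<i> * z)"
  have w0: "w \<noteq> 0" by (simp add: w_def)
  have "exp (Ln w) = exp (2 * of_real pi * \<i> * z)" using w0 by (simp add: w_def)
  then obtain n :: int where n: "Ln w = 2 * of_real pi * \<i> * z + (of_int (2 * n) * pi) * \<i>"
    using exp_eq by blast
  have "Ln w / (2 * of_real pi * \<i>) = z + of_int n"
    using n by (simp add: field_simps)
  then show ?thesis using w0 per[OF z] by (simp add: Fq_def w_def[symmetric])
qed

lemma Im_Ln_div_pos: "w \<noteq> 0 \<Longrightarrow> cmod w < 1 \<Longrightarrow> Im (Ln w / (2 * of_real pi * \<i>)) > 0"
  by (simp add: Im_Ln_div divide_neg_pos ln_less_zero_iff pi_gt_zero)  

lemma Fq_field_diff: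
  assumes holf: "f holomorphic_on upper_half"
    and per: "\<And>z n. z \<in> upper_half \<Longrightarrow> f (z + of_int n) = f z"
    and w0: "w0 \<noteq> 0" "cmod w0 < 1"
  shows "Fq f field_differentiable (at w0)"
proof -
  define c where "c = 2 * of_real pi * \<i>"
  have c0: "c \<noteq> 0" by (simp add: c_def)
  define z0 where "z0 = Ln w0 / c"
  define \<phi> where "\<phi> w = z0 + Ln (w / w0) / c" for w
  define d where "d = min (cmod w0) (1 - cmod w0)"
  have d0: "d > 0" using w0 by (simp add: d_def)
  have z0u: "z0 \<in> upper_half" using Im_Ln_div_pos[OF w0] by (simp add: z0_def c_def upper_half_iff)
  have cz0: "exp (c * z0) = w0" using w0 c0 by (simp add: z0_def)
  have eq: "(f \<circ> \<phi>) w = Fq f w" if "w \<in> UNIV" "dist w w0 < d" for w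
  proof -
    have lt: "cmod (w - w0) < cmod w0" "cmod (w - w0) < 1 - cmod w0"
      using that by (auto simp: d_def dist_norm)
    have wn0: "w \<noteq> 0" using lt by auto
    have w1: "cmod w < 1" using lt norm_triangle_ineq2[of w w0] by linarith
    have "exp (c * \<phi> w) = exp (c * z0) * exp (Ln (w / w0))"
      using c0 by (simp add: \<phi>_def distrib_left exp_add)
    also have "\<dots> = w" using wn0 w0 by (simp add: cz0)
    finally have ex: "exp (c * \<phi> w) = w" .
    have "exp (- 2 * pi * Im (\<phi> w)) < 1"
      using norm_exp_2pii[of "\<phi> w"] ex w1 by (simp only: c_def)
    then have "0 < 2 * pi * Im (\<phi> w)" by simp
    then have "Im (\<phi> w) > 0"
      using pi_gt_zero by (simp add: zero_less_mult_iff)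
    then have "\<phi> w \<in> upper_half" by (simp add: upper_half_iff)
    from Fq_exp[OF per this] ex show ?thesis by (simp add: c_def)
  qed
  have "\<phi> field_differentiable (at w0)"
  proof -
    have "(\<lambda>w. w / w0) field_differentiable (at w0)"
      using w0(1) by (intro derivative_intros field_differentiable_divide) auto
    moreover have "Ln field_differentiable (at ((\<lambda>w. w / w0) w0))"
      using w0(1) by (intro field_differentiable_at_Ln) (simp add: nonpos_Reals_def)
    ultimately have "(Ln \<circ> (\<lambda>w. w / w0)) field_differentiable (at w0)"
      by (rule field_differentiable_compose)
    then show ?thesis unfolding \<phi>_def o_def
      by (intro field_differentiable_add field_differentiable_divide field_differentiable_const) (auto simp: c0)
  qed
  moreover have "f field_differentiable (at (\<phi> w0))"
  proof -
    have "\<phi> w0 = z0" using w0 by (simp add: \<phi>_def)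
    moreover have "open upper_half"
      unfolding upper_half_def by (simp add: open_halfspace_Im_gt)
    ultimately show ?thesis using holf z0u
      by (simp add: holomorphic_on_imp_differentiable_at)
  qed
  ultimately have "(f \<circ> \<phi>) field_differentiable (at w0)"
    by (rule field_differentiable_compose)
  then have "Fq f field_differentiable (at w0 within UNIV)"
    using field_differentiable_transform_within[OF d0, of w0 UNIV "f \<circ> \<phi>" "Fq f"] eq by auto
  then show ?thesis by simp
qed

lemma Fq_tendsto0:
  assumes cusp: "\<forall>\<epsilon>>0. \<exists>Y. \<forall>z. Im z \<ge> Y \<longrightarrow> cmod (f z) \<le> \<epsilon>"
  shows "(Fq f \<longlongrightarrow> 0) (at 0)"
  unfolding Lim_at
proof (intro allI impI)
  fix e :: real assume e: "e > 0"
  then obtain Y where Y: "\<And>z. Im z \<ge> Y \<Longrightarrow> cmod (f z) \<le> e/2"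
    using cusp by (meson half_gt_zero)
  define d where "d = exp (- 2 * pi * max Y 1)"
  have d0: "d > 0" by (simp add: d_def)
  have "cmod (Fq f w) < e" if "0 < dist w 0" "dist w 0 < d" for w
  proof -
    have w0: "w \<noteq> 0" and wd: "cmod w < d" using that by auto
    have "ln (cmod w) < ln d" using w0 wd d0 by (simp add: ln_less_cancel_iff)
    then have "ln (cmod w) < - 2 * pi * max Y 1" by (simp add: d_def)
    then have "max Y 1 * (2*pi) < - ln (cmod w)" by (simp add: algebra_simps)
    then have "- ln (cmod w) / (2*pi) > max Y 1"
      using pi_gt_zero by (subst pos_less_divide_eq) auto
    then have "Im (Ln w / (2 * of_real pi * \<i>)) \<ge> Y"
      using Im_Ln_div[OF w0] by simp
    then have "cmod (f (Ln w / (2 * of_real pi * \<i>))) \<le> e/2" by (rule Y)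
    then show ?thesis using w0 e by (simp add: Fq_def)
  qed
  then show "\<exists>d>0. \<forall>x. 0 < dist x 0 \<and> dist x 0 < d \<longrightarrow> dist (Fq f x) 0 < e"
    using d0 by auto
qed

lemma Fq_holo:
  assumes holf: "f holomorphic_on upper_half"
    and per: "\<And>z n. z \<in> upper_half \<Longrightarrow> f (z + of_int n) = f z"
    and cusp: "\<forall>\<epsilon>>0. \<exists>Y. \<forall>z. Im z \<ge> Y \<longrightarrow> cmod (f z) \<le> \<epsilon>"
  shows "Fq f holomorphic_on ball 0 1"
proof (rule no_isolated_singularity'[where K = "{0}"])
  show "(Fq f \<longlongrightarrow> Fq f z) (at z within ball 0 1)" if "z \<in> {0}" for z
    using that Fq_tendsto0[OF cusp] by (auto simp: Fq_def intro: tendsto_within_subset)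
  have "open (ball (0::complex) 1 - {0})" by auto
  moreover have "\<forall>x\<in>ball 0 1 - {0}. \<exists>f'. DERIV (Fq f) x :> f'"
    using Fq_field_diff[OF holf per] by (auto simp: field_differentiable_def)
  ultimately show "Fq f holomorphic_on (ball 0 1 - {0})"
    by (simp add: holomorphic_on_open)
qed auto

lemma exp_m2pi_lt_half: "exp (- 2 * pi) < 1/2"
proof -
  have "1 + 2*pi \<le> exp (2*pi)" by (rule exp_ge_add_one_self)
  then have "exp (2*pi) > 2" using pi_gt3 by linarith
  then show ?thesis by (simp add: exp_minus field_simps)
qed

lemma cusp_line_bound:
  assumes holf: "f holomorphic_on upper_half"
    and per: "\<And>z n. z \<in> upper_half \<Longrightarrow> f (z + of_int n) = f z"
    and cusp: "\<forall>\<epsilon>>0. \<exists>Y. \<forall>z. Im z \<ge> Y \<longrightarrow> cmod (f z) \<le> \<epsilon>"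
    and s0: "s > 0" and zs: "Im z \<ge> s + 1"
  shows "cmod (f z) \<le> 2 * exp (- 2 * pi * (Im z - s)) * integral {0..1} (\<lambda>t. cmod (f (Complex t s)))"
proof -
  define F where "F = Fq f"
  have holF: "F holomorphic_on ball 0 1" unfolding F_def by (rule Fq_holo[OF holf per cusp])
  have F0: "F 0 = 0" by (simp add: F_def Fq_def)
  define G where "G = (\<lambda>w. if w = 0 then deriv F 0 else (F w - F 0) / (w - 0))"
  have holG: "G holomorphic_on ball 0 1" unfolding G_def
    by (rule pole_lemma[OF holF]) simp
  define \<rho> where "\<rho> = exp (- 2 * pi * s)"
  have \<rho>0: "\<rho> > 0" by (simp add: \<rho>_def)
  have \<rho>1: "\<rho> < 1" using s0 pi_gt_zero by (simp add: \<rho>_def)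
  define w where "w = exp (2 * of_real pi * \<i> * z)"
  have wn: "cmod w = exp (- 2 * pi * Im z)" by (simp add: w_def norm_exp_2pii)
  have w0: "w \<noteq> 0" by (simp add: w_def)
  have wr: "cmod w < \<rho>" using zs s0 pi_gt_zero by (simp add: wn \<rho>_def)
  have zu: "z \<in> upper_half" using zs s0 by (simp add: upper_half_iff)
  have holGc: "G holomorphic_on cball 0 \<rho>"
    by (rule holomorphic_on_subset[OF holG]) (use \<rho>1 in auto)
  have "((\<lambda>u. G u/(u-w)) has_contour_integral (2 * of_real pi * \<i> * G w)) (circlepath 0 \<rho>)"
    by (rule Cauchy_integral_circlepath_simple[OF holGc]) (use wr in simp)
  then have hi: "((\<lambda>t. G (circlepath 0 \<rho> t) / (circlepath 0 \<rho> t - w) * vector_derivative (circlepath 0 \<rho>) (at t))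
      has_integral (2 * of_real pi * \<i> * G w)) {0..1}"
    by (simp add: has_contour_integral)
  define L where "L = integral {0..1} (\<lambda>t. cmod (f (Complex t s)))"
  have contf: "continuous_on {0..1} (\<lambda>t. cmod (f (Complex t s)))"
  proof -
    have "continuous_on upper_half f" using holf by (rule holomorphic_on_imp_continuous_on)
    moreover have "continuous_on {0..1} (\<lambda>t. Complex t s)"
      by (intro continuous_intros)
    moreover have "(\<lambda>t. Complex t s) ` {0..1} \<subseteq> upper_half" using s0 by (auto simp: upper_half_iff)
    ultimately have "continuous_on {0..1} (\<lambda>t. f (Complex t s))"
      by (rule continuous_on_compose2)
    then show ?thesis by (intro continuous_intros)
  qed
  have intb: "(\<lambda>t. 2 * pi * cmod (f (Complex t s)) / (\<rho> - cmod w)) integrable_on {0..1}"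
    by (intro integrable_continuous_interval continuous_intros contf) (use wr in auto)
  have bnd: "norm (G (circlepath 0 \<rho> t) / (circlepath 0 \<rho> t - w) * vector_derivative (circlepath 0 \<rho>) (at t))
       \<le> 2 * pi * cmod (f (Complex t s)) / (\<rho> - cmod w)" if t: "t \<in> {0..1}" for t
  proof -
    have ge: "exp (2 * of_real pi * \<i> * Complex t s) = circlepath 0 \<rho> t"
    proof -
      have "2 * of_real pi * \<i> * Complex t s = complex_of_real (- 2 * pi * s) + 2 * of_real pi * \<i> * of_real t"
        by (simp add: complex_eq_iff)
      then have "exp (2 * of_real pi * \<i> * Complex t s) = exp (complex_of_real (- 2 * pi * s)) * exp (2 * of_real pi * \<i> * of_real t)"
        by (simp only: exp_add)
      also have "exp (complex_of_real (- 2 * pi * s)) = complex_of_real \<rho>"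
        by (simp only: \<rho>_def exp_of_real)
      finally show ?thesis by (simp add: circlepath)
    qed
    have cu: "Complex t s \<in> upper_half" using s0 by (simp add: upper_half_iff)
    have Fg: "F (circlepath 0 \<rho> t) = f (Complex t s)"
      using Fq_exp[OF per cu] ge by (simp add: F_def)
    have ng: "cmod (circlepath 0 \<rho> t) = \<rho>" using \<rho>0 by (simp add: circlepath norm_mult)
    then have g0: "circlepath 0 \<rho> t \<noteq> 0" using \<rho>0 by auto
    have Gg: "G (circlepath 0 \<rho> t) = f (Complex t s) / circlepath 0 \<rho> t"
      using g0 by (simp add: G_def F0 Fg)
    have vd: "cmod (vector_derivative (circlepath 0 \<rho>) (at t)) = 2 * pi * \<rho>"
      using \<rho>0 by (simp add: vector_derivative_circlepath norm_mult)
    have dist: "cmod (circlepath 0 \<rho> t - w) \<ge> \<rho> - cmod w"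
      using norm_triangle_ineq2[of "circlepath 0 \<rho> t" w] ng by linarith
    have dpos: "\<rho> - cmod w > 0" using wr by simp
    have "norm (G (circlepath 0 \<rho> t) / (circlepath 0 \<rho> t - w) * vector_derivative (circlepath 0 \<rho>) (at t))
        = cmod (f (Complex t s)) / \<rho> / cmod (circlepath 0 \<rho> t - w) * (2 * pi * \<rho>)"
      by (simp add: Gg norm_mult norm_divide ng vd)
    also have "\<dots> = 2 * pi * cmod (f (Complex t s)) / cmod (circlepath 0 \<rho> t - w)"
      using \<rho>0 by (simp add: field_simps)
    also have "\<dots> \<le> 2 * pi * cmod (f (Complex t s)) / (\<rho> - cmod w)"
      by (intro divide_left_mono dist) (use dpos dist pi_gt_zero in \<open>auto intro!: mult_pos_pos\<close>)
    finally show ?thesis .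
  qed
  have "norm (2 * of_real pi * \<i> * G w) \<le> integral {0..1} (\<lambda>t. 2 * pi * cmod (f (Complex t s)) / (\<rho> - cmod w))"
    using integral_norm_bound_integral[OF has_integral_integrable[OF hi] intb bnd] integral_unique[OF hi]
    by simp
  also have "\<dots> = 2 * pi * L / (\<rho> - cmod w)"
    by (simp add: L_def divide_inverse integral_mult_right integral_mult_left mult.assoc)
  finally have "2 * pi * cmod (G w) \<le> 2 * pi * L / (\<rho> - cmod w)"
    by (simp add: norm_mult)
  then have "(2 * pi) * cmod (G w) \<le> (2 * pi) * (L / (\<rho> - cmod w))" by simp
  then have Gw: "cmod (G w) \<le> L / (\<rho> - cmod w)"
    by (rule mult_left_le_imp_le) (use pi_gt_zero in simp)
  have fz: "f z = w * G w"
    using Fq_exp[OF per zu] w0 by (simp add: G_def F0 F_def[symmetric] w_def[symmetric])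
  have L0: "L \<ge> 0" unfolding L_def by (rule integral_nonneg) (auto intro: integrable_continuous_interval contf)
  have "cmod (f z) \<le> cmod w * (L / (\<rho> - cmod w))"
    unfolding fz norm_mult by (rule mult_left_mono[OF Gw]) simp
  also have "\<dots> \<le> 2 * exp (- 2 * pi * (Im z - s)) * L"
  proof -
    define r where "r = exp (- 2 * pi * (Im z - s))"
    have wr': "cmod w = r * \<rho>" by (simp add: wn r_def \<rho>_def flip: exp_add) (simp add: algebra_simps)
    have "r \<le> exp (- 2 * pi)" unfolding r_def using zs pi_gt_zero by simp
    then have r2: "r < 1/2" using exp_m2pi_lt_half by linarith
    have r0: "r > 0" by (simp add: r_def)
    have "cmod w * (L / (\<rho> - cmod w)) = r / (1 - r) * L"
      using \<rho>0 r2 by (simp add: wr' field_simps)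
    also have "\<dots> \<le> 2 * r * L"
      using r0 r2 L0 by (intro mult_right_mono) (auto simp: field_simps)
    finally show ?thesis by (simp add: r_def)
  qed
  finally show ?thesis by (simp add: L_def)
qed



lemma periodic_integral:
  fixes \<phi> :: "real \<Rightarrow> real"
  assumes cont: "continuous_on UNIV \<phi>" and per: "\<And>t. \<phi> (t + 1) = \<phi> t"
  shows "integral {0..1} \<phi> = integral {-1/2..1/2} \<phi>"
proof -
  have int: "\<phi> integrable_on {a..b}" for a b
    by (rule integrable_continuous_interval) (rule continuous_on_subset[OF cont], auto)
  have "integral {0..1} \<phi> = integral {0..1/2} \<phi> + integral {1/2..1} \<phi>"
    using Henstock_Kurzweil_Integration.integral_combine[where a=0 and c="1/2" and b=1 and f=\<phi>] int by simp
  also have "integral {1/2..1} \<phi> = integral {1/2 - 1..1 - 1} (\<lambda>x. \<phi> (x + 1))"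
    by (rule integral_shift_real_ivl[symmetric])
  also have "\<dots> = integral {-1/2..0} \<phi>" by (simp add: per)
  also have "integral {0..1/2} \<phi> + integral {-1/2..0} \<phi> = integral {-1/2..1/2} \<phi>"
    using Henstock_Kurzweil_Integration.integral_combine[where a="-1/2" and c=0 and b="1/2" and f=\<phi>] int by simp
  finally show ?thesis .
qed

definition Pc :: "real \<times> real \<Rightarrow> complex" where "Pc p = Complex (snd p) (fst p)"
definition Qc :: "complex \<Rightarrow> real \<times> real" where "Qc z = (Im z, Re z)"

lemma Pc_image: "Pc ` cbox (u1, u2) (v1, v2) = cbox (Complex u2 u1) (Complex v2 v1)"
proof (rule set_eqI, rule iffI)
  fix z assume "z \<in> Pc ` cbox (u1, u2) (v1, v2)"
  then show "z \<in> cbox (Complex u2 u1) (Complex v2 v1)"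
    by (auto simp: Pc_def in_cbox_complex_iff cbox_Pair_iff)
next
  fix z assume "z \<in> cbox (Complex u2 u1) (Complex v2 v1)"
  then have "Qc z \<in> cbox (u1, u2) (v1, v2)" "z = Pc (Qc z)"
    by (auto simp: Pc_def Qc_def in_cbox_complex_iff cbox_Pair_iff)
  then show "z \<in> Pc ` cbox (u1, u2) (v1, v2)" by blast
qed

lemma Qc_image: "Qc ` cbox a b = cbox (Im a, Re a) (Im b, Re b)"
proof (rule set_eqI, rule iffI)
  fix z assume "z \<in> Qc ` cbox a b"
  then show "z \<in> cbox (Im a, Re a) (Im b, Re b)"
    by (auto simp: Qc_def in_cbox_complex_iff cbox_Pair_iff)
next
  fix p assume "p \<in> cbox (Im a, Re a) (Im b, Re b)"
  then have "Pc p \<in> cbox a b" "p = Qc (Pc p)"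
    by (cases p; auto simp: Pc_def Qc_def in_cbox_complex_iff cbox_Pair_iff)+
  then show "p \<in> Qc ` cbox a b" by blast
qed

lemma content_complex_cbox:
  "Henstock_Kurzweil_Integration.content (cbox (Complex a c) (Complex b d)) = Henstock_Kurzweil_Integration.content (cbox a b) * Henstock_Kurzweil_Integration.content (cbox c d)"
proof (cases "a \<le> b \<and> c \<le> d")
  case True
  then have "Complex a c \<in> cbox (Complex a c) (Complex b d)" by (simp add: in_cbox_complex_iff)
  then have "cbox (Complex a c) (Complex b d) \<noteq> {}" by blast
  then show ?thesis using True by (simp add: content_cbox_if Basis_complex_def inner_complex_def)
next
  case False
  then have "cbox (Complex a c) (Complex b d) = {}" by (auto simp: in_cbox_complex_iff)
  then show ?thesis using False by auto
qed

lemma lint_box: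
  fixes g :: "complex \<Rightarrow> real"
  assumes cont: "continuous_on (cbox (Complex x0 y0) (Complex x1 y1)) g"
  shows "set_integrable lborel (cbox (Complex x0 y0) (Complex x1 y1)) g"
    and "(LINT z:cbox (Complex x0 y0) (Complex x1 y1)|lborel. g z)
          = integral {y0..y1} (\<lambda>y. integral {x0..x1} (\<lambda>x. g (Complex x y)))"
proof -
  define S where "S = cbox (Complex x0 y0) (Complex x1 y1)"
  have "integrable lborel (\<lambda>x. indicator S x *\<^sub>R g x)"
    by (rule borel_integrable_compact) (auto simp: S_def cont)
  then show si: "set_integrable lborel (cbox (Complex x0 y0) (Complex x1 y1)) g"
    by (simp add: set_integrable_def S_def)
  have "(LINT z:S|lborel. g z) = integral S g"
    using set_borel_integral_eq_integral(2)[OF si] by (simp add: S_def)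
  moreover have hi: "(g has_integral integral S g) S"
    using cont by (auto simp: S_def intro!: integrable_integral integrable_continuous)
  have "((\<lambda>x. g (Pc x)) has_integral (1 / 1) *\<^sub>R integral S g) (Qc ` S)"
    unfolding S_def
  proof (rule has_integral_twiddle[where r = 1])
    show "Qc (Pc x) = x" for x by (simp add: Pc_def Qc_def)
    show "Pc (Qc x) = x" for x by (simp add: Pc_def Qc_def)
    have "continuous_on UNIV Pc" unfolding Pc_def by (intro continuous_intros)
    then show "continuous (at x) Pc" for x
      by (metis continuous_on_eq_continuous_at open_UNIV UNIV_I)
    show "\<exists>w z. Pc ` cbox u v = cbox w z" for u v
      by (cases u; cases v) (auto simp: Pc_image)
    show "\<exists>w z. Qc ` cbox u v = cbox w z" for u v
      by (auto simp: Qc_image)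
    show "Henstock_Kurzweil_Integration.content (Pc ` cbox u v) = 1 * Henstock_Kurzweil_Integration.content (cbox u v)" for u v
      by (cases u; cases v) (simp add: Pc_image content_complex_cbox content_Pair mult.commute)
  qed (use hi in \<open>simp_all add: S_def\<close>)
  then have "integral S g = integral (cbox (y0, x0) (y1, x1)) (\<lambda>x. g (Pc x))"
    by (simp add: S_def Qc_image integral_unique)
  also have "\<dots> = integral (cbox y0 y1) (\<lambda>y. integral (cbox x0 x1) (\<lambda>x. g (Pc (y, x))))"
  proof (rule integral_prod_continuous)
    have "continuous_on (cbox (y0, x0) (y1, x1)) Pc" unfolding Pc_def by (intro continuous_intros)
    moreover have "Pc ` cbox (y0, x0) (y1, x1) \<subseteq> cbox (Complex x0 y0) (Complex x1 y1)"
      by (simp add: Pc_image)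
    ultimately show "continuous_on (cbox (y0, x0) (y1, x1)) (\<lambda>x. g (Pc x))"
      by (rule continuous_on_compose2[OF cont])
  qed
  finally show "(LINT z:cbox (Complex x0 y0) (Complex x1 y1)|lborel. g z)
          = integral {y0..y1} (\<lambda>y. integral {x0..x1} (\<lambda>x. g (Complex x y)))"
    using \<open>(LINT z:S|lborel. g z) = integral S g\<close> by (simp add: S_def Pc_def)
qed



lemma cont_pair:
  assumes "continuous_on upper_half f"
  shows "continuous_on {p. fst p > 0} (\<lambda>p. cmod (f (Complex (snd p) (fst p))))"
proof -
  have "continuous_on {p. fst p > (0::real)} (\<lambda>p::real\<times>real. Complex (snd p) (fst p))"
    by (intro continuous_intros)
  moreover have "(\<lambda>p::real\<times>real. Complex (snd p) (fst p)) ` {p. fst p > 0} \<subseteq> upper_half"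
    by (auto simp: upper_half_iff)
  ultimately have "continuous_on {p. fst p > (0::real)} (\<lambda>p::real\<times>real. f (Complex (snd p) (fst p)))"
    by (rule continuous_on_compose2[OF assms])
  then show ?thesis by (intro continuous_intros)
qed

lemma cont_line:
  assumes "continuous_on upper_half f" "s > 0"
  shows "continuous_on A (\<lambda>x. f (Complex x s))"
proof -
  have "continuous_on A (\<lambda>x. Complex x s)" by (intro continuous_intros)
  moreover have "(\<lambda>x. Complex x s) ` A \<subseteq> upper_half" using assms(2) by (auto simp: upper_half_iff)
  ultimately show ?thesis by (rule continuous_on_compose2[OF assms(1)])
qed

lemma box_sub_fund:
  assumes "Y \<ge> 1"
  shows "cbox (Complex (-1/2) Y) (Complex (1/2) Z) \<subseteq> fund_dom"
proof
  fix z assume z: "z \<in> cbox (Complex (-1/2) Y) (Complex (1/2) Z)"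
  then have "Im z \<ge> 1" "\<bar>Re z\<bar> \<le> 1/2" using assms by (auto simp: in_cbox_complex_iff)
  moreover have "cmod z \<ge> \<bar>Im z\<bar>" by (rule abs_Im_le_cmod)
  ultimately show "z \<in> fund_dom" by (auto simp: fund_dom_def)
qed

lemma good_line:
  fixes f :: "complex \<Rightarrow> complex" and k :: nat
  defines "h \<equiv> (\<lambda>z. (1 * Im z ^ k * (cmod (f z))^2) / (Im z)^2)"
  assumes contf: "continuous_on upper_half f"
    and si: "set_integrable lborel fund_dom h"
    and n1: "(LINT z:fund_dom|lborel. h z) = 1"
    and k2: "k \<ge> 2" and Y1: "Y \<ge> 1"
  shows "\<exists>s\<in>{Y..Y+1}. (integral {-1/2..1/2} (\<lambda>x. cmod (f (Complex x s))))^2 \<le> Y^2 / Y^k"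
proof -
  define S where "S = cbox (Complex (-1/2) Y) (Complex (1/2) (Y+1))"
  have Sf: "S \<subseteq> fund_dom" unfolding S_def by (rule box_sub_fund[OF Y1])
  have cpair: "continuous_on {p. fst p > 0} (\<lambda>p. cmod (f (Complex (snd p) (fst p))))"
    by (rule cont_pair[OF contf])
  have contS: "continuous_on S h"
  proof -
    have "continuous_on S f"
      by (rule continuous_on_subset[OF contf]) (use Y1 in \<open>auto simp: S_def in_cbox_complex_iff upper_half_iff\<close>)
    moreover have "\<forall>z\<in>S. Im z \<noteq> 0" using Y1 by (auto simp: S_def in_cbox_complex_iff)
    ultimately show ?thesis unfolding h_def by (intro continuous_intros) auto
  qed
  note lb = lint_box[of "-1/2" Y "1/2" "Y+1" h, folded S_def, OF contS]
  have "(LINT z:S|lborel. h z) \<le> (LINT z:fund_dom|lborel. h z)"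
    unfolding set_lebesgue_integral_def
  proof (rule integral_mono)
    show "integrable lborel (\<lambda>x. indicat_real S x *\<^sub>R h x)" using lb(1) by (simp add: set_integrable_def)
    show "integrable lborel (\<lambda>x. indicat_real fund_dom x *\<^sub>R h x)" using si by (simp add: set_integrable_def)
    have h0: "h z \<ge> 0" if "z \<in> fund_dom" for z using that by (simp add: h_def fund_dom_def)
    show "indicat_real S x *\<^sub>R h x \<le> indicat_real fund_dom x *\<^sub>R h x" for x
      using Sf h0[of x] by (auto simp: indicator_def)
  qed
  then have le1: "integral {Y..Y+1} (\<lambda>y. integral {-1/2..1/2} (\<lambda>x. h (Complex x y))) \<le> 1"
    using lb(2) n1 by simp
  define Qf where "Qf y = integral {-1/2..1/2} (\<lambda>x. cmod (f (Complex x y))^2)" for y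
  have inner: "integral {-1/2..1/2} (\<lambda>x. h (Complex x y)) = y^k / y^2 * Qf y" for y
  proof -
    have "(\<lambda>x. h (Complex x y)) = (\<lambda>x. (y^k / y^2) * cmod (f (Complex x y))^2)"
      by (simp add: h_def fun_eq_iff)
    then show ?thesis by (simp add: Qf_def)
  qed
  have contQ: "continuous_on {Y..Y+1} Qf"
  proof -
    have "continuous_on ({Y..Y+1} \<times> cbox (-1/2) (1/2)) (\<lambda>(y, x). cmod (f (Complex x y))^2)"
    proof -
      have "continuous_on ({Y..Y+1} \<times> cbox (-1/2) (1/2)) (\<lambda>p. cmod (f (Complex (snd p) (fst p))))"
        by (rule continuous_on_subset[OF cpair]) (use Y1 in auto)
      then have "continuous_on ({Y..Y+1} \<times> cbox (-1/2) (1/2)) (\<lambda>p. cmod (f (Complex (snd p) (fst p)))^2)"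
        by (rule continuous_on_power)
      then show ?thesis by (simp add: case_prod_beta)
    qed
    from integral_continuous_on_param[OF this] show ?thesis by (simp add: Qf_def)
  qed
  obtain s where s: "s \<in> {Y..Y+1}" and smin: "\<And>y. y \<in> {Y..Y+1} \<Longrightarrow> Qf s \<le> Qf y"
    using continuous_attains_inf[OF compact_Icc _ contQ] Y1 by auto
  have Q0: "Qf y \<ge> 0" if "y \<in> {Y..Y+1}" for y unfolding Qf_def
    by (rule integral_nonneg) (use that Y1 in \<open>auto intro!: integrable_continuous_interval continuous_intros cont_line[OF contf]\<close>)
  have "Y^k / Y^2 * Qf s \<le> 1"
  proof -
    have "integral {Y..Y+1} (\<lambda>y. Y^k / Y^2 * Qf s) \<le> integral {Y..Y+1} (\<lambda>y. y^k / y^2 * Qf y)"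
    proof (rule integral_le)
      show "(\<lambda>y. Y^k / Y^2 * Qf s) integrable_on {Y..Y+1}" by (rule integrable_const_ivl)
      show "(\<lambda>y. y^k / y^2 * Qf y) integrable_on {Y..Y+1}"
        by (rule integrable_continuous_interval) (use Y1 in \<open>auto intro!: continuous_intros contQ\<close>)
      show "Y^k / Y^2 * Qf s \<le> y^k / y^2 * Qf y" if y: "y \<in> {Y..Y+1}" for y
      proof -
        have "Y^k / Y^2 = Y^(k-2)" using Y1 k2 by (simp add: power_diff)
        moreover have "y^k / y^2 = y^(k-2)" using Y1 y k2 by (simp add: power_diff)
        moreover have "Y^(k-2) \<le> y^(k-2)" using y Y1 by (intro power_mono) auto
        moreover have "Y^(k-2) * Qf s \<le> y^(k-2) * Qf y"
          by (rule mult_mono) (use smin[OF y] Q0[OF s] Y1 y \<open>Y^(k-2) \<le> y^(k-2)\<close> in auto)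
        ultimately show ?thesis by simp
      qed
    qed
    then show ?thesis using le1[unfolded inner] by simp
  qed
  then have Qs: "Qf s \<le> Y^2 / Y^k" using Y1 by (simp add: field_simps)
  define lam where "lam = sqrt (Y^2 / Y^k)"
  have lam0: "lam > 0" using Y1 by (simp add: lam_def)
  have lam2: "lam^2 = Y^2 / Y^k" using Y1 by (simp add: lam_def)
  have s0: "s > 0" using s Y1 by auto
  have intf: "(\<lambda>x. cmod (f (Complex x s))) integrable_on {-1/2..1/2}"
    by (rule integrable_continuous_interval) (intro continuous_intros cont_line[OF contf s0])
  have "integral {-1/2..1/2} (\<lambda>x. cmod (f (Complex x s)))
        \<le> integral {-1/2..1/2} (\<lambda>x. (lam^2 + cmod (f (Complex x s))^2) / (2*lam))"
  proof (rule integral_le[OF intf])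
    show "(\<lambda>x. (lam^2 + cmod (f (Complex x s))^2) / (2*lam)) integrable_on {-1/2..1/2}"
      by (rule integrable_continuous_interval) (use lam0 in \<open>intro continuous_intros cont_line[OF contf s0], auto\<close>)
    show "cmod (f (Complex x s)) \<le> (lam^2 + cmod (f (Complex x s))^2) / (2*lam)" for x
    proof -
      have "0 \<le> (lam - cmod (f (Complex x s)))^2" by simp
      then show ?thesis using lam0 by (simp add: field_simps power2_eq_square)
    qed
  qed
  also have "\<dots> = (lam^2 + Qf s) / (2*lam)"
    unfolding Qf_def
    by (simp add: integral_add integral_divide integrable_continuous_interval continuous_intros cont_line[OF contf s0])
  also have "\<dots> \<le> lam" using Qs lam2 lam0 by (simp add: field_simps power2_eq_square)
  finally have "integral {-1/2..1/2} (\<lambda>x. cmod (f (Complex x s))) \<le> lam" .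
  moreover have "integral {-1/2..1/2} (\<lambda>x. cmod (f (Complex x s))) \<ge> 0"
    by (rule integral_nonneg[OF intf]) simp
  ultimately have "(integral {-1/2..1/2} (\<lambda>x. cmod (f (Complex x s))))^2 \<le> lam^2"
    by (simp add: power_mono)
  then show ?thesis using s lam2 by auto
qed

lemma pointwise_bound:
  fixes f :: "complex \<Rightarrow> complex" and k :: nat
  defines "h \<equiv> (\<lambda>z. (1 * Im z ^ k * (cmod (f z))^2) / (Im z)^2)"
  assumes holf: "f holomorphic_on upper_half"
    and per: "\<And>z n. z \<in> upper_half \<Longrightarrow> f (z + of_int n) = f z"
    and cusp: "\<forall>\<epsilon>>0. \<exists>Y. \<forall>z. Im z \<ge> Y \<longrightarrow> cmod (f z) \<le> \<epsilon>"
    and si: "set_integrable lborel fund_dom h"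
    and n1: "(LINT z:fund_dom|lborel. h z) = 1"
    and k2: "k \<ge> 2" and z4: "Im z \<ge> 4"
  shows "Im z ^ k * (cmod (f z))^2 / (Im z)^2 \<le> 2^k * exp (4*pi) * exp (-2*pi*Im z)"
proof -
  have contf: "continuous_on upper_half f" using holf by (rule holomorphic_on_imp_continuous_on)
  define y where "y = Im z"
  define Y where "Y = y / 2"
  have Y1: "Y \<ge> 1" using z4 by (simp add: Y_def y_def)
  obtain s where s: "s \<in> {Y..Y+1}"
    and Ls: "(integral {-1/2..1/2} (\<lambda>x. cmod (f (Complex x s))))^2 \<le> Y^2 / Y^k"
    using good_line[OF contf si[unfolded h_def] n1[unfolded h_def] k2 Y1] by blast
  have s0: "s > 0" using s Y1 by auto
  define L where "L = integral {0..1} (\<lambda>t. cmod (f (Complex t s)))"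
  have "L = integral {-1/2..1/2} (\<lambda>t. cmod (f (Complex t s)))"
    unfolding L_def
  proof (rule periodic_integral)
    show "continuous_on UNIV (\<lambda>t. cmod (f (Complex t s)))"
      by (intro continuous_intros cont_line[OF contf s0])
    show "cmod (f (Complex (t + 1) s)) = cmod (f (Complex t s))" for t
    proof -
      have "Complex (t + 1) s = Complex t s + of_int 1" by (simp add: complex_eq_iff)
      moreover have "Complex t s \<in> upper_half" using s0 by (simp add: upper_half_iff)
      ultimately show ?thesis using per by metis
    qed
  qed
  with Ls have L2: "L^2 \<le> Y^2 / Y^k" by simp
  have L0: "L \<ge> 0" unfolding L_def
    by (rule integral_nonneg) (auto intro!: integrable_continuous_interval continuous_intros cont_line[OF contf s0])
  have zs: "Im z \<ge> s + 1" using s z4 by (simp add: Y_def y_def)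
  have fz: "cmod (f z) \<le> 2 * exp (- 2 * pi * (y - s)) * L"
    using cusp_line_bound[OF holf per cusp s0 zs] by (simp add: L_def y_def)
  have E: "exp (- 2 * pi * (y - s)) \<le> exp (- 2 * pi * (y/2 - 1))"
    using s pi_gt_zero by (simp add: Y_def)
  have "cmod (f z) \<le> 2 * exp (- 2 * pi * (y/2 - 1)) * L"
    using fz E L0 by (smt (verit) mult_right_mono)
  then have "(cmod (f z))^2 \<le> (2 * exp (- 2 * pi * (y/2 - 1)) * L)^2"
    by (intro power_mono) auto
  also have "\<dots> = 4 * exp (- 2 * pi * (y/2 - 1))^2 * L^2" by (simp add: power_mult_distrib)
  also have "\<dots> \<le> 4 * exp (- 2 * pi * (y/2 - 1))^2 * (Y^2 / Y^k)"
    by (rule mult_left_mono[OF L2]) simp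
  finally have f2: "(cmod (f z))^2 \<le> 4 * exp (- 2 * pi * (y/2 - 1))^2 * (Y^2 / Y^k)" .
  have ypos: "y > 0" using z4 by (simp add: y_def)
  have "y ^ k * (cmod (f z))^2 / y^2 \<le> y ^ k * (4 * exp (- 2 * pi * (y/2 - 1))^2 * (Y^2 / Y^k)) / y^2"
    using f2 ypos by (intro divide_right_mono mult_left_mono) auto
  also have "\<dots> = (y/Y)^k * (Y/y)^2 * 4 * exp (- 2 * pi * (y/2 - 1))^2"
    using ypos Y1 by (simp add: power_divide field_simps)
  also have "\<dots> = 2^k * exp (4*pi) * exp (-2*pi*y)"
  proof -
    have "y / Y = 2" "Y / y = 1/2" using ypos by (auto simp: Y_def)
    moreover have "exp (- 2 * pi * (y/2 - 1))^2 = exp (4*pi) * exp (-2*pi*y)"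
      by (simp add: exp_add[symmetric] power2_eq_square algebra_simps flip: exp_add)
    ultimately show ?thesis by (simp add: power2_eq_square)
  qed
  finally show ?thesis by (simp add: y_def)
qed



lemma MH_psi_eq:
  assumes a1: "a > 1" and H1: "H \<ge> 1"
    and Vzero: "\<forall>y>0. y \<notin> {a..b} \<longrightarrow> V y = 0"
  shows "z \<in> cbox (Complex (-1/2) (a*H)) (Complex (1/2) (b*H)) \<Longrightarrow> MH H (psiV V) z = V (Im z / H)"
    and "z \<in> fund_dom \<Longrightarrow> z \<notin> cbox (Complex (-1/2) (a*H)) (Complex (1/2) (b*H)) \<Longrightarrow> MH H (psiV V) z = 0"
proof -
  have H0: "H > 0" using H1 by simp
  assume "z \<in> cbox (Complex (-1/2) (a*H)) (Complex (1/2) (b*H))"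
  then have "Im z \<ge> a * H" by (simp add: in_cbox_complex_iff)
  moreover have "a * H > H" using a1 H0 by simp
  ultimately have zH: "Im z > H" by linarith
  then have "Im z > H" "Im z / H > 1" using H0 by (auto simp: less_divide_eq)
  then show "MH H (psiV V) z = V (Im z / H)" by (simp add: MH_def psiV_def)
next
  have H0: "H > 0" using H1 by simp
  assume z: "z \<in> fund_dom" "z \<notin> cbox (Complex (-1/2) (a*H)) (Complex (1/2) (b*H))"
  show "MH H (psiV V) z = 0"
  proof (cases "Im z > H")
    case True
    then have t1: "Im z / H > 1" using H0 by (simp add: less_divide_eq)
    have "\<bar>Re z\<bar> \<le> 1/2" using z by (simp add: fund_dom_def)
    then have "\<not> (a * H \<le> Im z \<and> Im z \<le> b * H)" using z(2) by (auto simp: in_cbox_complex_iff)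
    then have "Im z / H \<notin> {a..b}" using H0 by (auto simp: field_simps)
    then have "V (Im z / H) = 0" using Vzero t1 by auto
    then show ?thesis using True t1 by (simp add: MH_def psiV_def)
  next
    case False
    then show ?thesis by (simp add: MH_def)
  qed
qed

lemma nu_value:
  assumes a1: "a > 1" and ab: "a \<le> b" and H1: "H \<ge> 1"
    and Vzero: "\<forall>y>0. y \<notin> {a..b} \<longrightarrow> V y = 0"
    and Vc: "continuous_on {0<..} V"
  shows "int_M (MH H (psiV V)) = integral {0<..} (\<lambda>y. V y / y^2) / H"
proof -
  have H0: "H > 0" using H1 by simp
  define B where "B = cbox (Complex (-1/2) (a*H)) (Complex (1/2) (b*H))"
  define g where "g z = V (Im z / H) / (Im z)^2" for z
  have Bf: "B \<subseteq> fund_dom" unfolding B_def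
    by (rule box_sub_fund) (use mult_mono[of 1 a 1 H] a1 H1 in simp)
  have eqf: "(\<lambda>z. indicator fund_dom z *\<^sub>R (MH H (psiV V) z / (Im z)^2)) = (\<lambda>z. indicator B z *\<^sub>R g z)"
  proof
    fix z
    show "indicator fund_dom z *\<^sub>R (MH H (psiV V) z / (Im z)^2) = indicator B z *\<^sub>R g z"
    proof (cases "z \<in> B")
      case True
      then show ?thesis using Bf MH_psi_eq(1)[OF a1 H1 Vzero, of z] by (auto simp: B_def g_def)
    next
      case False
      then show ?thesis using MH_psi_eq(2)[OF a1 H1 Vzero, of z] by (auto simp: B_def indicator_def)
    qed
  qed
  have contg: "continuous_on B g"
  proof -
    have "\<forall>z\<in>B. Im z > 0" using a1 H0 by (auto simp: B_def in_cbox_complex_iff intro: less_le_trans[of 0 "a*H"])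
    moreover have "continuous_on B (\<lambda>z. Im z / H)" using H0 by (intro continuous_intros) auto
    moreover have "(\<lambda>z. Im z / H) ` B \<subseteq> {0<..}" using calculation(1) H0 by auto
    ultimately have "continuous_on B (\<lambda>z. V (Im z / H))"
      by (intro continuous_on_compose2[OF Vc]) auto
    then show ?thesis unfolding g_def using \<open>\<forall>z\<in>B. Im z > 0\<close>
      by (intro continuous_intros) auto
  qed
  have "int_M (MH H (psiV V)) = (LINT z:B|lborel. g z)"
    unfolding int_M_def set_lebesgue_integral_def eqf by (rule refl)
  also have "\<dots> = integral {a*H..b*H} (\<lambda>y. integral {-1/2..1/2} (\<lambda>x. g (Complex x y)))"
    using lint_box(2)[of "-1/2" "a*H" "1/2" "b*H" g] contg by (simp add: B_def)
  also have "\<dots> = integral {a*H..b*H} (\<lambda>y. V (y / H) / y^2)"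
    by (simp add: g_def)
  also have "\<dots> = integral {a..b} (\<lambda>y. V y / y^2) / H"
  proof -
    define G where "G = (\<lambda>t. V t / t^2)"
    have "continuous_on {a..b} G" unfolding G_def
      using a1 by (intro continuous_intros continuous_on_subset[OF Vc]) auto
    then have hG: "(G has_integral integral {a..b} G) (cbox a b)"
      by (simp add: integrable_integral integrable_continuous_interval)
    have "((\<lambda>x. G ((1/H) *\<^sub>R x + 0)) has_integral (integral {a..b} G /\<^sub>R (1/H) ^ DIM(real)))
           (cbox ((a - 0) /\<^sub>R (1/H)) ((b - 0) /\<^sub>R (1/H)))"
      by (rule has_integral_affinity'[OF hG]) (use H0 in simp)
    then have "((\<lambda>x. G (x / H)) has_integral (H * integral {a..b} G)) {a*H..b*H}"
      by (simp add: divide_inverse mult.commute)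
    then have "((\<lambda>x. (1/H^2) * G (x / H)) has_integral ((1/H^2) * (H * integral {a..b} G))) {a*H..b*H}"
      by (rule has_integral_mult_right)
    moreover have "(1/H^2) * G (x / H) = V (x / H) / x^2" for x
      using H0 by (simp add: G_def field_simps power2_eq_square)
    ultimately have "((\<lambda>x. V (x / H) / x^2) has_integral integral {a..b} G / H) {a*H..b*H}"
      using H0 by (simp add: power2_eq_square field_simps)
    then have "integral {a*H..b*H} (\<lambda>x. V (x / H) / x^2) = integral {a..b} G / H" by (rule integral_unique)
    then show ?thesis by (simp only: G_def)
  qed
  also have "integral {a..b} (\<lambda>y. V y / y^2) = integral {0<..} (\<lambda>y. V y / y^2)"
  proof -
    define G' where "G' t = (if t \<in> {a..b} then V t / t^2 else 0)" for t
    have "continuous_on {a..b} (\<lambda>t. V t / t^2)"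
      using a1 by (intro continuous_intros continuous_on_subset[OF Vc]) auto
    then have "((\<lambda>t. V t / t^2) has_integral integral {a..b} (\<lambda>t. V t / t^2)) {a..b}"
      by (simp add: integrable_integral integrable_continuous_interval)
    then have "(G' has_integral integral {a..b} (\<lambda>t. V t / t^2)) {a..b}"
      by (rule has_integral_eq[rotated]) (simp add: G'_def)
    then have "(G' has_integral integral {a..b} (\<lambda>t. V t / t^2)) {0<..}"
      by (rule has_integral_on_superset) (use a1 in \<open>auto simp: G'_def\<close>)
    then have "integral {0<..} G' = integral {a..b} (\<lambda>t. V t / t^2)" by (rule integral_unique)
    moreover have "integral {0<..} G' = integral {0<..} (\<lambda>y. V y / y^2)"
      by (rule Henstock_Kurzweil_Integration.integral_cong) (use Vzero in \<open>auto simp: G'_def\<close>)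
    ultimately show ?thesis by simp
  qed
  finally show ?thesis .
qed

lemma mu_bound:
  fixes f :: "complex \<Rightarrow> complex" and k :: nat
  defines "h \<equiv> (\<lambda>z. (1 * Im z ^ k * (cmod (f z))^2) / (Im z)^2)"
  assumes holf: "f holomorphic_on upper_half"
    and per: "\<And>z n. z \<in> upper_half \<Longrightarrow> f (z + of_int n) = f z"
    and cusp: "\<forall>\<epsilon>>0. \<exists>Y. \<forall>z. Im z \<ge> Y \<longrightarrow> cmod (f z) \<le> \<epsilon>"
    and si: "set_integrable lborel fund_dom h"
    and n1: "(LINT z:fund_dom|lborel. h z) = 1"
    and k2: "k \<ge> 2"
    and a1: "a > 1" and ab: "a \<le> b" and H4: "H \<ge> 4"
    and Vzero: "\<forall>y>0. y \<notin> {a..b} \<longrightarrow> V y = 0"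
    and Vm: "\<forall>t\<in>{a..b}. \<bar>V t\<bar> \<le> Vm"
  shows "\<bar>mu_f k f (MH H (psiV V))\<bar> \<le> Vm * (2^k * exp (4*pi) * exp (-2*pi*(a*H))) * ((b-a) * H)"
proof -
  have H1: "H \<ge> 1" using H4 by simp
  have H0: "H > 0" using H4 by simp
  have Vm0: "Vm \<ge> 0" using Vm ab by force
  define C where "C = 2^k * exp (4*pi) * exp (-2*pi*(a*H))"
  have C0: "C \<ge> 0" by (simp add: C_def)
  define B where "B = cbox (Complex (-1/2) (a*H)) (Complex (1/2) (b*H))"
  define F where "F z = (MH H (psiV V) z * Im z ^ k * (cmod (f z))^2) / (Im z)^2" for z
  have mu: "mu_f k f (MH H (psiV V)) = integral\<^sup>L lborel (\<lambda>z. indicator fund_dom z *\<^sub>R F z)"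
    by (simp add: mu_f_def int_M_def set_lebesgue_integral_def F_def)
  have aH4: "a * H \<ge> 4" using mult_mono[of 1 a 4 H] a1 H4 by simp
  have pw: "norm (indicator fund_dom z *\<^sub>R F z) \<le> indicator B z *\<^sub>R (Vm * C)" for z
  proof (cases "z \<in> fund_dom")
    case False then show ?thesis using Vm0 C0 by (simp add: indicator_def)
  next
    case zf: True
    show ?thesis
    proof (cases "z \<in> B")
      case False
      then have "F z = 0" using MH_psi_eq(2)[OF a1 H1 Vzero zf] by (simp add: F_def B_def)
      then show ?thesis using Vm0 C0 by (simp add: indicator_def)
    next
      case zB: True
      have zim: "a * H \<le> Im z" "Im z \<le> b * H" using zB by (auto simp: B_def in_cbox_complex_iff)
      have mh: "MH H (psiV V) z = V (Im z / H)" using MH_psi_eq(1)[OF a1 H1 Vzero] zB by (simp add: B_def)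
      have "Im z / H \<in> {a..b}" using zim H0 by (auto simp: field_simps)
      then have vb: "\<bar>V (Im z / H)\<bar> \<le> Vm" using Vm by auto
      have z4: "Im z \<ge> 4" using zim aH4 by linarith
      have pb: "Im z ^ k * (cmod (f z))^2 / (Im z)^2 \<le> 2^k * exp (4*pi) * exp (-2*pi*Im z)"
        by (rule pointwise_bound[OF holf per cusp si[unfolded h_def] n1[unfolded h_def] k2 z4])
      also have "\<dots> \<le> C" unfolding C_def using zim pi_gt_zero by simp
      finally have pc: "Im z ^ k * (cmod (f z))^2 / (Im z)^2 \<le> C" .
      have nn: "Im z ^ k * (cmod (f z))^2 / (Im z)^2 \<ge> 0" using z4 by simp
      have "\<bar>F z\<bar> = \<bar>V (Im z / H)\<bar> * (Im z ^ k * (cmod (f z))^2 / (Im z)^2)"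
      proof -
        have "F z = V (Im z / H) * (Im z ^ k * (cmod (f z))^2 / (Im z)^2)"
          by (simp add: F_def mh)
        then show ?thesis using nn by (simp only: abs_mult)
      qed
      also have "\<dots> \<le> Vm * C" using vb pc nn Vm0 by (intro mult_mono) auto
      finally show ?thesis using zf zB by simp
    qed
  qed
  have cint: "set_integrable lborel B (\<lambda>z. Vm * C)"
    unfolding B_def by (rule lint_box(1)) simp
  have cval: "(LINT z:B|lborel. Vm * C) = (b*H - a*H) * (Vm * C)"
    unfolding B_def using ab H0 by (subst lint_box(2)) (simp_all add: mult_right_mono)
  show ?thesis
  proof (cases "integrable lborel (\<lambda>z. indicator fund_dom z *\<^sub>R F z)")
    case True
    have "\<bar>mu_f k f (MH H (psiV V))\<bar> \<le> integral\<^sup>L lborel (\<lambda>z. norm (indicator fund_dom z *\<^sub>R F z))"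
      unfolding mu using integral_norm_bound[of lborel "\<lambda>z. indicator fund_dom z *\<^sub>R F z"] by simp
    also have "\<dots> \<le> integral\<^sup>L lborel (\<lambda>z. indicator B z *\<^sub>R (Vm * C))"
      by (rule integral_mono[OF integrable_norm[OF True] cint[unfolded set_integrable_def] pw])
    also have "\<dots> = (b*H - a*H) * (Vm * C)" using cval by (simp add: set_lebesgue_integral_def)
    finally show ?thesis by (simp add: C_def algebra_simps)
  next
    case False
    then have "mu_f k f (MH H (psiV V)) = 0" unfolding mu by (rule not_integrable_integral_eq)
    then show ?thesis using Vm0 C0 ab H0 by (simp add: C_def)
  qed
qed

lemma final_ineq:
  fixes k :: nat
  assumes H1: "H \<ge> 1" and kH: "real k - 1 \<le> H" and k1: "k \<ge> 1" and a1: "a \<ge> 1"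
    and Vm0: "Vm \<ge> 0" and ab: "a \<le> b" and e0: "\<epsilon> > 0" and I0: "I \<noteq> 0"
    and HR: "H \<ge> 2 * Vm * exp (4*pi) * (b-a) * pi / (3 * \<epsilon> * \<bar>I\<bar>)"
  shows "Vm * (2^k * exp (4*pi) * exp (-2*pi*(a*H))) * ((b-a) * H) \<le> \<epsilon> * \<bar>I / H / (pi/3)\<bar>"
proof -
  have H0: "H > 0" using H1 by simp
  have e1: "(2::real)^k \<le> 2 * exp H"
  proof -
    have "(2::real)^k = 2 * 2^(k-1)" using k1 by (cases k) auto
    also have "(2::real)^(k-1) \<le> exp 1 ^ (k-1)"
      by (rule power_mono) (use exp_ge_add_one_self[of 1] in auto)
    also have "exp 1 ^ (k-1) = exp (real (k-1))" by (simp add: exp_of_nat_mult[symmetric])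
    also have "exp (real (k-1)) \<le> exp H" using kH k1 by (simp add: of_nat_diff)
    finally show ?thesis by simp
  qed
  have e2: "exp (-2*pi*(a*H)) \<le> exp (-6*H)"
  proof -
    have "6 \<le> 2*pi*a" using pi_gt3 a1 mult_mono[of 3 pi 1 a] by linarith
    then have "6 * H \<le> 2*pi*a*H" using H0 by (intro mult_right_mono) auto
    then show ?thesis by simp
  qed
  have e4: "exp (-5*H) \<le> 1 / H^3"
  proof -
    have "H \<le> exp H" using exp_ge_add_one_self[of H] by linarith
    then have "H^5 \<le> exp H ^ 5" using H0 by (intro power_mono) auto
    also have "exp H ^ 5 = exp (5*H)" using exp_of_nat_mult[of 5 H] by simp
    finally have "H^3 \<le> exp (5*H)" using H1 power_increasing[of 3 5 H] by linarith
    then show ?thesis using H0 by (simp add: exp_minus field_simps)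
  qed
  have key: "2^k * exp (-2*pi*(a*H)) \<le> 2 / H^3"
  proof -
    have "2^k * exp (-2*pi*(a*H)) \<le> (2 * exp H) * exp (-6*H)"
      by (intro mult_mono e1 e2) auto
    also have "\<dots> = 2 * exp (-5*H)" by (simp add: mult.assoc exp_add[symmetric])
    also have "\<dots> \<le> 2 / H^3" using e4 by simp
    finally show ?thesis .
  qed
  define D where "D = Vm * exp (4*pi) * (b-a) * H"
  have D0: "D \<ge> 0" using Vm0 ab H0 by (simp add: D_def)
  have "Vm * (2^k * exp (4*pi) * exp (-2*pi*(a*H))) * ((b-a) * H) = D * (2^k * exp (-2*pi*(a*H)))"
    by (simp add: D_def algebra_simps)
  also have "\<dots> \<le> D * (2 / H^3)" by (rule mult_left_mono[OF key D0])
  also have "\<dots> = (2 * Vm * exp (4*pi) * (b-a)) / H^2"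
    using H0 by (simp add: D_def power2_eq_square power3_eq_cube field_simps)
  also have "\<dots> \<le> \<epsilon> * \<bar>I / H / (pi/3)\<bar>"
  proof -
    have "2 * Vm * exp (4*pi) * (b-a) * pi \<le> H * (3 * \<epsilon> * \<bar>I\<bar>)"
      using HR e0 I0 by (simp add: pos_divide_le_eq)
    then have "(2 * Vm * exp (4*pi) * (b-a) * pi) / (pi * H^2) \<le> (H * (3 * \<epsilon> * \<bar>I\<bar>)) / (pi * H^2)"
      using H0 pi_gt_zero by (intro divide_right_mono) auto
    moreover have "(2 * Vm * exp (4*pi) * (b-a) * pi) / (pi * H^2) = (2 * Vm * exp (4*pi) * (b-a)) / H^2"
      using pi_gt_zero by simp
    moreover have "\<epsilon> * \<bar>I / H / (pi/3)\<bar> = (H * (3 * \<epsilon> * \<bar>I\<bar>)) / (pi * H^2)"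
      using H0 pi_gt_zero e0 by (simp add: abs_divide abs_mult power2_eq_square mult_ac)
    ultimately show ?thesis by simp
  qed
  finally show ?thesis .
qed

lemma Hk_facts:
  fixes f :: "complex \<Rightarrow> complex" and k :: nat
  assumes "f \<in> Hk k"
  shows "f holomorphic_on upper_half"
    and "\<And>z n. z \<in> upper_half \<Longrightarrow> f (z + of_int n) = f z"
    and "\<forall>\<epsilon>>0. \<exists>Y. \<forall>z. Im z \<ge> Y \<longrightarrow> cmod (f z) \<le> \<epsilon>"
    and "set_integrable lborel fund_dom (\<lambda>z. (1 * Im z ^ k * (cmod (f z))^2) / (Im z)^2)"
    and "(LINT z:fund_dom|lborel. (1 * Im z ^ k * (cmod (f z))^2) / (Im z)^2) = 1"
proof -
  have cf: "cusp_form k f" and n: "mu_f k f (\<lambda>_. 1) = 1" using assms by (auto simp: Hk_def)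
  then show "f holomorphic_on upper_half" "\<forall>\<epsilon>>0. \<exists>Y. \<forall>z. Im z \<ge> Y \<longrightarrow> cmod (f z) \<le> \<epsilon>"
    by (auto simp: cusp_form_def)
  show "f (z + of_int n) = f z" if "z \<in> upper_half" for z n
  proof -
    have "\<forall>a b c d :: int. a * d - b * c = 1 \<longrightarrow>
        (\<forall>z\<in>upper_half. f ((of_int a * z + of_int b) / (of_int c * z + of_int d))
                         = (of_int c * z + of_int d) ^ k * f z)" using cf by (simp add: cusp_form_def)
    from this[rule_format, of 1 1 n 0 z] that show ?thesis by simp
  qed
  show n1: "(LINT z:fund_dom|lborel. (1 * Im z ^ k * (cmod (f z))^2) / (Im z)^2) = 1"
    using n by (simp add: mu_f_def int_M_def)
  show "set_integrable lborel fund_dom (\<lambda>z. (1 * Im z ^ k * (cmod (f z))^2) / (Im z)^2)"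
  proof (rule ccontr)
    assume "\<not> ?thesis"
    then have "(LINT z:fund_dom|lborel. (1 * Im z ^ k * (cmod (f z))^2) / (Im z)^2) = 0"
      unfolding set_integrable_def set_lebesgue_integral_def by (rule not_integrable_integral_eq)
    with n1 show False by simp
  qed
qed

theorem mainTheorem2:
  fixes \<theta> :: real and V :: "real \<Rightarrow> real"
  assumes "\<theta> \<ge> 1"
    and "smooth_pos V"
    and "\<exists>a b. 1 < a \<and> a \<le> b \<and> (\<forall>y>0. y \<notin> {a..b} \<longrightarrow> V y = 0)"
    and "integral {0<..} (\<lambda>y. V y / y^2) \<noteq> 0"
  shows "\<forall>\<epsilon>>0. \<exists>K. \<forall>k f. k \<ge> K \<and> even k \<and> f \<in> Hk k \<longrightarrow>
           \<bar>mu_f k f (MH ((real k - 1) powr \<theta>) (psiV V))\<bar>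
             \<le> \<epsilon> * \<bar>nu (MH ((real k - 1) powr \<theta>) (psiV V))\<bar>"
proof (intro allI impI)
  fix \<epsilon> :: real assume e0: "\<epsilon> > 0"
  obtain a b where a1: "1 < a" and ab: "a \<le> b" and Vzero: "\<forall>y>0. y \<notin> {a..b} \<longrightarrow> V y = 0"
    using assms(3) by blast
  have Vc: "continuous_on {0<..} V"
  proof (rule continuous_at_imp_continuous_on, intro ballI)
    fix y :: real assume "y \<in> {0<..}"
    then have "(deriv ^^ 0) V differentiable (at y)" using assms(2) unfolding smooth_pos_def by blast
    then show "isCont V y" by (simp add: differentiable_imp_continuous_within)
  qed
  have "continuous_on {a..b} (\<lambda>t. \<bar>V t\<bar>)"
    by (intro continuous_intros continuous_on_subset[OF Vc]) (use a1 in auto)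
  then obtain t0 where "t0 \<in> {a..b}" and t0: "\<forall>t\<in>{a..b}. \<bar>V t\<bar> \<le> \<bar>V t0\<bar>"
    using continuous_attains_sup[OF compact_Icc] ab by (metis atLeastAtMost_iff empty_iff order.refl)
  define Vm where "Vm = \<bar>V t0\<bar>"
  have Vm: "\<forall>t\<in>{a..b}. \<bar>V t\<bar> \<le> Vm" using t0 by (simp add: Vm_def)
  have Vm0: "Vm \<ge> 0" by (simp add: Vm_def)
  define I where "I = integral {0<..} (\<lambda>y. V y / y^2)"
  have I0: "I \<noteq> 0" using assms(4) by (simp add: I_def)
  define R where "R = max 5 (2 * Vm * exp (4*pi) * (b-a) * pi / (3 * \<epsilon> * \<bar>I\<bar>))"
  define K where "K = nat \<lceil>R\<rceil> + 2"
  show "\<exists>K. \<forall>k f. k \<ge> K \<and> even k \<and> f \<in> Hk k \<longrightarrow>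
           \<bar>mu_f k f (MH ((real k - 1) powr \<theta>) (psiV V))\<bar>
             \<le> \<epsilon> * \<bar>nu (MH ((real k - 1) powr \<theta>) (psiV V))\<bar>"
  proof (intro exI[of _ K] allI impI)
    fix k :: nat and f assume kf: "k \<ge> K \<and> even k \<and> f \<in> Hk k"
    then have kK: "k \<ge> K" and fH: "f \<in> Hk k" by auto
    have "real k \<ge> real (nat \<lceil>R\<rceil>) + 2" using kK by (simp add: K_def)
    moreover have "real (nat \<lceil>R\<rceil>) \<ge> R" by linarith
    ultimately have kR: "real k - 1 \<ge> R + 1" by linarith
    have R5: "R \<ge> 5" by (simp add: R_def)
    have k2: "k \<ge> 2" using kR R5 by linarith
    define H where "H = (real k - 1) powr \<theta>"
    have "(real k - 1) powr 1 \<le> (real k - 1) powr \<theta>"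
      by (rule powr_mono) (use assms(1) kR R5 in auto)
    then have kH: "real k - 1 \<le> H" using kR R5 by (simp add: H_def)
    have H4: "H \<ge> 4" using kH kR R5 by linarith
    have H1: "H \<ge> 1" using H4 by simp
    have HR: "H \<ge> 2 * Vm * exp (4*pi) * (b-a) * pi / (3 * \<epsilon> * \<bar>I\<bar>)"
      using kH kR by (simp add: R_def)
    note F = Hk_facts[OF fH]
    have mu: "\<bar>mu_f k f (MH H (psiV V))\<bar> \<le> Vm * (2^k * exp (4*pi) * exp (-2*pi*(a*H))) * ((b-a) * H)"
      by (rule mu_bound[OF F k2 a1 ab H4 Vzero Vm])
    have nu: "nu (MH H (psiV V)) = I / H / (pi/3)"
      using nu_value[OF a1 ab H1 Vzero Vc] by (simp add: nu_def volM_def I_def)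
    have "Vm * (2^k * exp (4*pi) * exp (-2*pi*(a*H))) * ((b-a) * H) \<le> \<epsilon> * \<bar>I / H / (pi/3)\<bar>"
      by (rule final_ineq[OF H1 kH _ _ Vm0 ab e0 I0 HR]) (use k2 a1 in auto)
    with mu nu show "\<bar>mu_f k f (MH ((real k - 1) powr \<theta>) (psiV V))\<bar>
             \<le> \<epsilon> * \<bar>nu (MH ((real k - 1) powr \<theta>) (psiV V))\<bar>"
      by (simp add: H_def)
  qed
qed


end
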